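(* Let $G$ be a finite simple graph, $s\geq1$, and $e_1,\dots,e_s$ edges of $G$ (repetitions allowed). Every minimal monomial generator of $(I(G)^{s+1}:e_1\cdots e_s)$ is of the form $uv$ for vertices $u,v$ (possibly $u=v$) such that either $uv$ is an edge of $G$ or $u$ and $v$ are even-connected with respect to $e_1\cdots e_s$.
   Context: $S=K[\,x : x\in V(G)\,]$, $I(G)=(xy : xy\text{ an edge of } G)$, edges identified with degree-2 monomials, $(J:m)=\{f\in S : fm\in J\}$. Even-connection: vertices $u,v$ (possibly equal) are even-connected with respect to $e_1,\dots,e_s$ if there is a sequence of vertices $p_0,\dots,p_{2k+1}$, $k\ge1$ (vertices may repeat), with (1) $p_0=u$, $p_{2k+1}=v$; (2) for all $0\le l\le k-1$, $p_{2l+1}p_{2l+2}=e_i$ for some $i$; (3) for every $i$, $|\{l\ge0: p_{2l+1}p_{2l+2}=e_i\}|\le|\{j: e_j=e_i\}|$; (4) for all $0\le r\le 2k$, $p_rp_{r+1}$ is an edge of $G$. *)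

theory Defs
  imports "HOL-Library.Poly_Mapping"
begin

text \<open>Polynomial ring S = K[x_v : v a vertex]: polynomials as finitely supported maps
  from exponent vectors (monomials) to coefficients.\<close>

type_synonym ('v, 'k) mpoly = "('v \<Rightarrow>\<^sub>0 nat) \<Rightarrow>\<^sub>0 'k"

definition mon :: "('v \<Rightarrow>\<^sub>0 nat) \<Rightarrow> ('v, 'k::comm_ring_1) mpoly" where
  "mon a = Poly_Mapping.single a 1"

definition var :: "'v \<Rightarrow> ('v, 'k::comm_ring_1) mpoly" where
  "var x = mon (Poly_Mapping.single x 1)"

definition ideal_gen :: "('a::comm_ring_1) set \<Rightarrow> 'a set" where
  "ideal_gen A = {f. \<exists>B c. finite B \<and> B \<subseteq> A \<and> f = (\<Sum>b\<in>B. c b * b)}"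

definition ideal_pow :: "('a::comm_ring_1) set \<Rightarrow> nat \<Rightarrow> 'a set" where
  "ideal_pow I n = ideal_gen {prod_list fs | fs. length fs = n \<and> set fs \<subseteq> I}"

definition colon :: "('a::comm_ring_1) set \<Rightarrow> 'a \<Rightarrow> 'a set" where
  "colon J m = {f. f * m \<in> J}"

definition edge_ideal :: "('v \<Rightarrow> 'v \<Rightarrow> bool) \<Rightarrow> ('v, 'k::comm_ring_1) mpoly set" where
  "edge_ideal E = ideal_gen {var x * var y | x y. E x y}"

definition min_mon_gens :: "('v, 'k::comm_ring_1) mpoly set \<Rightarrow> ('v \<Rightarrow>\<^sub>0 nat) set" where
  "min_mon_gens J = {a. mon a \<in> J \<and>
      (\<forall>b. (mon b :: ('v,'k) mpoly) dvd mon a \<and> mon b \<in> J \<longrightarrow> b = a)}"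

text \<open>Even-connection of u and v with respect to the edges es ! 0, ..., es ! (s-1)
  (edges given as vertex pairs, compared as unordered pairs).\<close>
definition even_connected ::
  "('v \<Rightarrow> 'v \<Rightarrow> bool) \<Rightarrow> ('v \<times> 'v) list \<Rightarrow> 'v \<Rightarrow> 'v \<Rightarrow> bool" where
  "even_connected E es u v \<longleftrightarrow>
     (\<exists>(p :: nat \<Rightarrow> 'v) (k :: nat). k \<ge> 1 \<and> p 0 = u \<and> p (2*k+1) = v \<and>
        (\<forall>l<k. \<exists>i<length es. {p (2*l+1), p (2*l+2)} = {fst (es!i), snd (es!i)}) \<and>
        (\<forall>i<length es.
           card {l. l < k \<and> {p (2*l+1), p (2*l+2)} = {fst (es!i), snd (es!i)}}
           \<le> card {j. j < length es \<and> {fst (es!j), snd (es!j)} = {fst (es!i), snd (es!i)}}) \<and>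
        (\<forall>r\<le>2*k. E (p r) (p (r+1))))"

end

theory Submission
  imports Defs "HOL-Library.Multiset"
begin


definition Em :: "('v \<times> 'v) multiset \<Rightarrow> 'v multiset" where
  "Em L = \<Sum>\<^sub># (image_mset (\<lambda>e. {#fst e, snd e#}) L)"

lemma Em_simps[simp]: "Em {#} = {#}" "Em (add_mset e L) = add_mset (fst e) (add_mset (snd e) (Em L))"
  "Em (L + K) = Em L + Em K"
  by (auto simp: Em_def)

definition U :: "('v \<Rightarrow> 'v \<Rightarrow> bool) \<Rightarrow> nat \<Rightarrow> ('v \<Rightarrow>\<^sub>0 nat) set" where
  "U E n = {c. \<exists>L. size L = n \<and> (\<forall>e\<in>#L. E (fst e) (snd e)) \<and> (\<forall>v. count (Em L) v \<le> Poly_Mapping.lookup c v)}"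

lemma U_up: assumes "c \<in> U E n" shows "c + d \<in> U E n"
proof -
  from assms obtain L where L: "size L = n" "\<forall>e\<in>#L. E (fst e) (snd e)"
    "\<forall>v. count (Em L) v \<le> Poly_Mapping.lookup c v" unfolding U_def by blast
  have "\<forall>v. count (Em L) v \<le> Poly_Mapping.lookup (c + d) v"
    using L(3) by (simp add: lookup_add trans_le_add1)
  with L show ?thesis unfolding U_def by blast
qed

lemma U_add: "c \<in> U E n \<Longrightarrow> d \<in> U E m \<Longrightarrow> c + d \<in> U E (n + m)"
  unfolding U_def
proof (clarsimp)
  fix L K assume "\<forall>e\<in>#L. E (fst e) (snd e)" "\<forall>v. count (Em L) v \<le> Poly_Mapping.lookup c v"
    "\<forall>e\<in>#K. E (fst e) (snd e)" "\<forall>v. count (Em K) v \<le> Poly_Mapping.lookup d v"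
  then show "\<exists>La. size La = size L + size K \<and> (\<forall>e\<in>#La. E (fst e) (snd e)) \<and> (\<forall>v. count (Em La) v \<le> Poly_Mapping.lookup (c + d) v)"
    by (intro exI[of _ "L + K"]) (auto simp: lookup_add add_mono)
qed

definition PU :: "('v \<Rightarrow> 'v \<Rightarrow> bool) \<Rightarrow> nat \<Rightarrow> ('v, 'k::comm_ring_1) mpoly set" where
  "PU E n = {f. Poly_Mapping.keys f \<subseteq> U E n}"

lemma PU_add: assumes "f \<in> PU E n" "g \<in> PU E n" shows "f + g \<in> PU E n"
proof -
  have "Poly_Mapping.keys (f + g) \<subseteq> Poly_Mapping.keys f \<union> Poly_Mapping.keys g" by (rule keys_add)
  also have "\<dots> \<subseteq> U E n" using assms unfolding PU_def by simp
  finally show ?thesis unfolding PU_def by simp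
qed

lemma PU_mult: assumes "f \<in> PU E n" "g \<in> PU E m" shows "f * g \<in> PU E (n + m)"
  unfolding PU_def mem_Collect_eq
proof (rule subsetI)
  fix x assume "x \<in> Poly_Mapping.keys (f * g)"
  then obtain a b where x: "x = a + b" and a: "a \<in> Poly_Mapping.keys f" and b: "b \<in> Poly_Mapping.keys g"
    using keys_mult[of f g] by blast
  from a assms(1) have "a \<in> U E n" unfolding PU_def by blast
  moreover from b assms(2) have "b \<in> U E m" unfolding PU_def by blast
  ultimately show "x \<in> U E (n + m)" unfolding x by (rule U_add)
qed

lemma PU_multl: assumes "f \<in> PU E n" shows "g * f \<in> PU E n"
  unfolding PU_def mem_Collect_eq
proof (rule subsetI)
  fix x assume "x \<in> Poly_Mapping.keys (g * f)"
  then obtain a b where x: "x = a + b" and b: "b \<in> Poly_Mapping.keys f" using keys_mult[of g f] by blast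
  from b assms have "b \<in> U E n" unfolding PU_def by blast
  from U_up[OF this, of a] show "x \<in> U E n" by (simp add: x add.commute)
qed

lemma PU_sum: assumes "\<And>b. b \<in> B \<Longrightarrow> h b \<in> PU E n" shows "sum h B \<in> PU E n"
proof -
  have "Poly_Mapping.keys (sum h B) \<subseteq> (\<Union>i\<in>B. Poly_Mapping.keys (h i))" by (rule keys_sum)
  also have "\<dots> \<subseteq> U E n" using assms unfolding PU_def by blast
  finally show ?thesis unfolding PU_def by simp
qed

lemma ideal_gen_PU: assumes "A \<subseteq> PU E n" shows "ideal_gen A \<subseteq> PU E n"
proof
  fix f assume "f \<in> ideal_gen A"
  then obtain B c where "B \<subseteq> A" "f = (\<Sum>b\<in>B. c b * b)" unfolding ideal_gen_def by blast
  then show "f \<in> PU E n" using assms by (auto intro!: PU_sum PU_multl)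
qed

lemma mon_mult[simp]: "(mon a :: ('v,'k::comm_ring_1) mpoly) * mon b = mon (a + b)"
  by (simp add: mon_def mult_single)

lemma keys_mon[simp]: "Poly_Mapping.keys (mon a :: ('v,'k::comm_ring_1) mpoly) = {a}"
  by (simp add: mon_def)

lemma one_PU: "(1::('v,'k::comm_ring_1) mpoly) \<in> PU E 0"
  unfolding PU_def U_def by (auto intro!: exI[of _ "{#}"])

lemma var_var: "(var x * var y :: ('v,'k::comm_ring_1) mpoly) = mon (Poly_Mapping.single x 1 + Poly_Mapping.single y 1)"
  by (simp add: var_def)

lemma edge_gen_PU: "E x y \<Longrightarrow> (var x * var y :: ('v,'k::comm_ring_1) mpoly) \<in> PU E 1"
  unfolding var_var PU_def U_def
  by (auto intro!: exI[of _ "{#(x,y)#}"] simp: lookup_add lookup_single)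

lemma edge_PU: "edge_ideal E \<subseteq> (PU E 1 :: ('v,'k::comm_ring_1) mpoly set)"
  unfolding edge_ideal_def
  by (rule ideal_gen_PU) (use edge_gen_PU[where E=E] in blast)

lemma prod_list_PU: "set fs \<subseteq> edge_ideal E \<Longrightarrow>
   prod_list fs \<in> (PU E (length fs) :: ('v,'k::comm_ring_1) mpoly set)"
proof (induction fs)
  case Nil then show ?case using one_PU by simp
next
  case (Cons f fs)
  then have "f \<in> PU E 1" "prod_list fs \<in> PU E (length fs)" using edge_PU by auto
  from PU_mult[OF this] show ?case by simp
qed

lemma pow_PU: "ideal_pow (edge_ideal E) n \<subseteq> (PU E n :: ('v,'k::comm_ring_1) mpoly set)"
  unfolding ideal_pow_def proof (rule ideal_gen_PU, rule subsetI)
  fix x :: "('v,'k) mpoly" assume "x \<in> {prod_list fs |fs. length fs = n \<and> set fs \<subseteq> edge_ideal E}"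
  then obtain fs where "x = prod_list fs" "length fs = n" "set fs \<subseteq> edge_ideal E" by blast
  then show "x \<in> PU E n" using prod_list_PU[of fs E] by simp
qed

lemma mon_in_pow: "(mon c :: ('v,'k::comm_ring_1) mpoly) \<in> ideal_pow (edge_ideal E) n \<Longrightarrow> c \<in> U E n"
  using pow_PU[where 'k='k, of E n] unfolding PU_def by auto




inductive conn :: "('v \<Rightarrow> 'v \<Rightarrow> bool) \<Rightarrow> 'v \<Rightarrow> 'v \<Rightarrow> 'v set multiset \<Rightarrow> bool" for E where
  base: "E x y \<Longrightarrow> conn E x y {#}"
| join: "conn E x p M1 \<Longrightarrow> conn E q y M2 \<Longrightarrow> E p q \<Longrightarrow> conn E x y (add_mset {p,q} (M1 + M2))"

lemma conn_sym:
  assumes symE: "\<And>x y. E x y \<Longrightarrow> E y x"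
  shows "conn E x y M \<Longrightarrow> conn E y x M"
proof (induction rule: conn.induct)
  case (base x y) then show ?case by (auto intro: conn.base symE)
next
  case (join x p M1 q y M2)
  from conn.join[OF join.IH(2) join.IH(1) symE[OF join.hyps(3)]]
  show ?case by (simp add: insert_commute add.commute)
qed

definition Dw :: "('v \<times> 'v \<times> 'v set multiset) multiset \<Rightarrow> 'v multiset" where
  "Dw W = \<Sum>\<^sub># (image_mset (\<lambda>f. {#fst f, fst (snd f)#}) W)"
definition Mw :: "('v \<times> 'v \<times> 'v set multiset) multiset \<Rightarrow> 'v set multiset" where
  "Mw W = \<Sum>\<^sub># (image_mset (\<lambda>f. snd (snd f)) W)"
definition sp :: "'v \<times> 'v \<Rightarrow> 'v set" where "sp e = {fst e, snd e}"

lemma Dw_simps[simp]: "Dw {#} = {#}" "Dw (add_mset f W) = add_mset (fst f) (add_mset (fst (snd f)) (Dw W))"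
  by (auto simp: Dw_def)
lemma Mw_simps[simp]: "Mw {#} = {#}" "Mw (add_mset f W) = snd (snd f) + Mw W"
  by (auto simp: Mw_def)

lemma split_end:
  assumes "p \<in># Dw W"
  shows "\<exists>x M W0. W = add_mset (x,p,M) W0 \<or> W = add_mset (p,x,M) W0"
  using assms
proof (induction W)
  case empty then show ?case by simp
next
  case (add f W)
  obtain a b M where f: "f = (a,b,M)" by (cases f) auto
  show ?case
  proof (cases "p = a \<or> p = b")
    case True
    then have "add_mset f W = add_mset (b,p,M) W \<or> add_mset f W = add_mset (p,b,M) W
      \<or> add_mset f W = add_mset (a,p,M) W" using f by auto
    then show ?thesis by blast
  next
    case False
    then have "p \<in># Dw W" using add.prems f by auto
    then obtain x M' W0 where "W = add_mset (x,p,M') W0 \<or> W = add_mset (p,x,M') W0"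
      using add.IH by blast
    then have "add_mset f W = add_mset (x,p,M') (add_mset f W0) \<or> add_mset f W = add_mset (p,x,M') (add_mset f W0)"
      by (auto simp: add_mset_commute)
    then show ?thesis by blast
  qed
qed

lemma sub_count: "A \<subseteq># B \<longleftrightarrow> (\<forall>a. count A a \<le> count B a)"
  by (simp add: subseteq_mset_def)

lemma H1: assumes "X \<subseteq># add_mset p Y" "p \<notin># X" shows "X \<subseteq># Y"
  unfolding sub_count
proof
  fix a
  have "count X a \<le> count (add_mset p Y) a" using assms(1) by (rule mset_subset_eq_count)
  then show "count X a \<le> count Y a" using assms(2) by (cases "a = p") (auto simp: not_in_iff)
qed

lemma H2: assumes "add_mset x X \<subseteq># Y" shows "X \<subseteq># Y"
  unfolding sub_count
proof
  fix a
  have "count (add_mset x X) a \<le> count Y a" using assms by (rule mset_subset_eq_count)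
  then show "count X a \<le> count Y a" by (cases "a = x") auto
qed

lemma H3: "add_mset x X \<subseteq># add_mset x Y \<Longrightarrow> X \<subseteq># Y"
  by simp

lemma comb:
  assumes symE: "\<And>x y. E x y \<Longrightarrow> E y x"
  shows "size W = size ES + 1 \<Longrightarrow>
    (\<forall>f\<in>#W. conn E (fst f) (fst (snd f)) (snd (snd f))) \<Longrightarrow>
    Dw W \<subseteq># A + Em ES \<Longrightarrow> (\<forall>e\<in>#ES. E (fst e) (snd e)) \<Longrightarrow>
    \<exists>u v M. {#u,v#} \<subseteq># A \<and> conn E u v M \<and> M \<subseteq># Mw W + image_mset sp ES"
proof (induction ES arbitrary: W)
  case empty
  then obtain f where W: "W = {#f#}" using size_1_singleton_mset by force
  show ?case
    using empty W by (intro exI[of _ "fst f"] exI[of _ "fst (snd f)"] exI[of _ "snd (snd f)"]) auto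
next
  case (add e ES)
  obtain p q where e: "e = (p,q)" by (cases e) auto
  define C where "C = A + Em ES"
  have D: "Dw W \<subseteq># add_mset p (add_mset q C)" using add.prems(3) e C_def by simp
  have drop: "\<exists>u v M. {#u,v#} \<subseteq># A \<and> conn E u v M \<and> M \<subseteq># Mw W + image_mset sp (add_mset e ES)"
    if f: "W = add_mset f W0" and DW0: "Dw W0 \<subseteq># C" for f W0
  proof -
    have "\<exists>u v M. {#u,v#} \<subseteq># A \<and> conn E u v M \<and> M \<subseteq># Mw W0 + image_mset sp ES"
      using add.IH[of W0] add.prems f DW0 C_def by auto
    moreover have "Mw W0 + image_mset sp ES \<subseteq># Mw W + image_mset sp (add_mset e ES)"
      using f by (simp add: subset_mset.add_mono)
    ultimately show ?thesis using subset_mset.order_trans by blast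
  qed
  have conn_of: "conn E x p' M" if "(x,p',M) \<in># W \<or> (p',x,M) \<in># W" for x p' M
  proof -
    from that have "conn E x p' M \<or> conn E p' x M" using add.prems(2) by fastforce
    then show ?thesis
    proof
      assume c: "conn E p' x M" show ?thesis by (rule conn_sym[where E=E], erule symE, rule c)
    qed
  qed
  have Dsplit: "Dw V = add_mset x (add_mset p' (Dw V0))"
    if "V = add_mset (x,p',M) V0 \<or> V = add_mset (p',x,M) V0" for V V0 x p' M
    using that by (auto simp: add_mset_commute)
  show ?case
  proof (cases "p \<in># Dw W")
    case False
    have D': "Dw W \<subseteq># add_mset q C" using D False by (rule H1)
    show ?thesis
    proof (cases "q \<in># Dw W")
      case False
      have DW: "Dw W \<subseteq># C" using D' False by (rule H1)
      obtain f W0 where fW: "W = add_mset f W0" using add.prems(1)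
        by (cases W) auto
      from DW fW have "add_mset (fst f) (add_mset (fst (snd f)) (Dw W0)) \<subseteq># C" by simp
      then have "Dw W0 \<subseteq># C" by (rule H2[OF H2])
      then show ?thesis by (rule drop[OF fW])
    next
      case True
      from split_end[OF True] obtain x M W0 where W: "W = add_mset (x,q,M) W0 \<or> W = add_mset (q,x,M) W0"
        by blast
      have "add_mset q (add_mset x (Dw W0)) \<subseteq># add_mset q C"
        using D' unfolding Dsplit[OF W] add_mset_commute[of x q] .
      then have "add_mset x (Dw W0) \<subseteq># C" by (rule H3)
      then have "Dw W0 \<subseteq># C" by (rule H2)
      then show ?thesis using W drop by blast
    qed
  next
    case True
    from split_end[OF True] obtain x M1 W0 where W: "W = add_mset (x,p,M1) W0 \<or> W = add_mset (p,x,M1) W0"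
      by blast
    have c1: "conn E x p M1" using W by (intro conn_of) auto
    have "add_mset p (add_mset x (Dw W0)) \<subseteq># add_mset p (add_mset q C)"
      using D unfolding Dsplit[OF W] add_mset_commute[of x p] .
    then have D0': "add_mset x (Dw W0) \<subseteq># add_mset q C" by (rule H3)
    then have D0: "Dw W0 \<subseteq># add_mset q C" by (rule H2)
    have M0: "Mw W = M1 + Mw W0" using W by auto
    show ?thesis
    proof (cases "q \<in># Dw W0")
      case False
      have "Dw W0 \<subseteq># C" using D0 False by (rule H1)
      then show ?thesis using W drop by blast
    next
      case True
      from split_end[OF True] obtain y M2 W1 where W0: "W0 = add_mset (y,q,M2) W1 \<or> W0 = add_mset (q,y,M2) W1"
        by blast
      have c2: "conn E q y M2" using W W0 by (intro conn_of) auto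
      have Epq: "E p q" using add.prems(4) e by auto
      define W' where "W' = add_mset (x, y, add_mset {p,q} (M1 + M2)) W1"
      have "size W' = size ES + 1" using add.prems(1) W W0 W'_def by auto
      moreover have "\<forall>f\<in>#W'. conn E (fst f) (fst (snd f)) (snd (snd f))"
        using W'_def conn.join[OF c1 c2 Epq] add.prems(2) W W0 by auto
      moreover have "Dw W' \<subseteq># A + Em ES"
      proof -
        have "add_mset q (add_mset x (add_mset y (Dw W1))) \<subseteq># add_mset q C"
          using D0' unfolding Dsplit[OF W0] add_mset_commute[of y q] add_mset_commute[of x q] .
        then have "add_mset x (add_mset y (Dw W1)) \<subseteq># C" by (rule H3)
        then show ?thesis using W'_def C_def by simp
      qed
      moreover have "\<forall>e\<in>#ES. E (fst e) (snd e)" using add.prems(4) by auto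
      ultimately have "\<exists>u v M. {#u,v#} \<subseteq># A \<and> conn E u v M \<and> M \<subseteq># Mw W' + image_mset sp ES"
        by (rule add.IH)
      then obtain u v M where "{#u,v#} \<subseteq># A" "conn E u v M" "M \<subseteq># Mw W' + image_mset sp ES"
        by blast
      moreover have "Mw W' + image_mset sp ES = Mw W + image_mset sp (add_mset e ES)"
        using W'_def M0 W0 e by (auto simp: sp_def)
      ultimately show ?thesis by auto
    qed
  qed
qed




lemma msplit: "mset (map F [0..<a+b]) = mset (map F [0..<a]) + mset (map (\<lambda>l. F (l + a)) [0..<b])"
proof -
  have "[0..<a+b] = [0..<a] @ [a..<a+b]" by (rule upt_add_eq_append) simp
  moreover have "[a..<a+b] = map (\<lambda>i. i + a) [0..<b]" by (simp add: map_add_upt add.commute)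
  ultimately show ?thesis by (simp add: comp_def)
qed

lemma conn_path:
  "conn E x y M \<Longrightarrow> \<exists>p k. p 0 = x \<and> p (2*k+1) = y \<and> (\<forall>r\<le>2*k. E (p r) (p (r+1))) \<and>
     mset (map (\<lambda>l. {p (2*l+1), p (2*l+2)}) [0..<k]) = M"
proof (induction rule: conn.induct)
  case (base x y)
  show ?case by (rule exI[of _ "\<lambda>r. if r = 0 then x else y"], rule exI[of _ 0]) (use base in auto)
next
  case (join x p M1 q y M2)
  from join.IH(1) obtain p1 k1 where P1: "p1 0 = x" "p1 (2*k1+1) = p" "\<forall>r\<le>2*k1. E (p1 r) (p1 (r+1))"
    "mset (map (\<lambda>l. {p1 (2*l+1), p1 (2*l+2)}) [0..<k1]) = M1" by blast
  from join.IH(2) obtain p2 k2 where P2: "p2 0 = q" "p2 (2*k2+1) = y" "\<forall>r\<le>2*k2. E (p2 r) (p2 (r+1))"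
    "mset (map (\<lambda>l. {p2 (2*l+1), p2 (2*l+2)}) [0..<k2]) = M2" by blast
  define P where "P r = (if r \<le> 2*k1+1 then p1 r else p2 (r - (2*k1+2)))" for r
  define F where "F l = {P (2*l+1), P (2*l+2)}" for l
  have "P 0 = x" using P1 by (simp add: P_def)
  moreover have "P (2*(k1 + (1 + k2))+1) = y" using P2 by (simp add: P_def)
  moreover have "\<forall>r\<le>2*(k1 + (1 + k2)). E (P r) (P (r+1))"
  proof (intro allI impI)
    fix r assume r: "r \<le> 2*(k1 + (1 + k2))"
    consider "r < 2*k1+1" | "r = 2*k1+1" | "r > 2*k1+1" by linarith
    then show "E (P r) (P (r+1))"
    proof cases
      case 1 then show ?thesis using P1(3) by (simp add: P_def)
    next
      case 2 then show ?thesis using P1(2) P2(1) join.hyps(3) by (simp add: P_def)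
    next
      case 3
      then have "r - (2*k1+2) \<le> 2*k2" using r by arith
      then have "E (p2 (r - (2*k1+2))) (p2 (r - (2*k1+2) + 1))" using P2(3) by blast
      moreover have "r + 1 - (2*k1+2) = r - (2*k1+2) + 1" using 3 by arith
      ultimately show ?thesis using 3 by (simp add: P_def)
    qed
  qed
  moreover have "mset (map F [0..<k1 + (1 + k2)]) = add_mset {p,q} (M1 + M2)"
  proof -
    have a: "mset (map F [0..<k1]) = M1"
      unfolding P1(4)[symmetric] by (rule arg_cong[where f=mset], rule map_cong) (auto simp: F_def P_def)
    have b: "mset (map (\<lambda>l. F (l + k1)) [0..<1]) = {#{p,q}#}"
      using P1(2) P2(1) by (simp add: F_def P_def)
    have c: "mset (map (\<lambda>l. F (l + 1 + k1)) [0..<k2]) = M2"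
      unfolding P2(4)[symmetric] by (rule arg_cong[where f=mset], rule map_cong) (auto simp: F_def P_def)
    have "mset (map F [0..<k1 + (1 + k2)]) = mset (map F [0..<k1]) + (mset (map (\<lambda>l. F (l + k1)) [0..<1])
       + mset (map (\<lambda>l. F (l + 1 + k1)) [0..<k2]))"
      unfolding msplit[of F k1] msplit[of "\<lambda>l. F (l + k1)" 1 k2] by (simp add: add.assoc)
    then show ?thesis using a b c by simp
  qed
  ultimately show ?case unfolding F_def by blast
qed




lemma conn_edges:
  assumes irr: "\<And>x. \<not> E x x"
  shows "conn E x y M \<Longrightarrow> \<exists>N. size N = size M + 1 \<and> (\<forall>e\<in>#N. E (fst e) (snd e)) \<and>
     Em N = {#x,y#} + \<Sum>\<^sub># (image_mset mset_set M)"
proof (induction rule: conn.induct)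
  case (base x y)
  then show ?case by (intro exI[of _ "{#(x,y)#}"]) auto
next
  case (join x p M1 q y M2)
  from join.IH(1) obtain N1 where N1: "size N1 = size M1 + 1" "\<forall>e\<in>#N1. E (fst e) (snd e)"
     "Em N1 = {#x,p#} + \<Sum>\<^sub># (image_mset mset_set M1)" by blast
  from join.IH(2) obtain N2 where N2: "size N2 = size M2 + 1" "\<forall>e\<in>#N2. E (fst e) (snd e)"
     "Em N2 = {#q,y#} + \<Sum>\<^sub># (image_mset mset_set M2)" by blast
  have pq: "p \<noteq> q" using join.hyps(3) irr by auto
  have ms: "mset_set {p,q} = {#p,q#}" using pq by simp
  have "Em (N1 + N2) = {#x,y#} + \<Sum>\<^sub># (image_mset mset_set (add_mset {p,q} (M1 + M2)))"
    using N1(3) N2(3) ms by (auto simp: multiset_eq_iff)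
  moreover have "size (N1 + N2) = size (add_mset {p,q} (M1 + M2)) + 1" using N1 N2 by simp
  moreover have "\<forall>e\<in>#N1 + N2. E (fst e) (snd e)" using N1 N2 by auto
  ultimately show ?case by blast
qed

definition pmm :: "'v multiset \<Rightarrow> ('v \<Rightarrow>\<^sub>0 nat)" where
  "pmm N = \<Sum>\<^sub># (image_mset (\<lambda>v. Poly_Mapping.single v 1) N)"

lemma pmm_simps[simp]: "pmm {#} = 0" "pmm (add_mset v N) = Poly_Mapping.single v 1 + pmm N"
  "pmm (N + K) = pmm N + pmm K"
  by (auto simp: pmm_def)

lemma lookup_pmm: "Poly_Mapping.lookup (pmm N) w = count N w"
  by (induction N) (auto simp: lookup_add lookup_single)

definition g :: "'v \<times> 'v \<Rightarrow> ('v, 'k::comm_ring_1) mpoly" where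
  "g e = var (fst e) * var (snd e)"

lemma mon_zero[simp]: "mon 0 = 1"
  by (simp add: mon_def)

lemma prod_g: "prod_mset (image_mset g L) = (mon (pmm (Em L)) :: ('v, 'k::comm_ring_1) mpoly)"
proof (induction L)
  case empty then show ?case by simp
next
  case (add e L)
  have "g e = (mon (Poly_Mapping.single (fst e) 1 + Poly_Mapping.single (snd e) 1) :: ('v, 'k) mpoly)"
    unfolding g_def by (rule var_var)
  then show ?case using add by (simp add: add.assoc)
qed

lemma gen_in: "x \<in> A \<Longrightarrow> x \<in> ideal_gen A"
  unfolding ideal_gen_def by (intro CollectI exI[of _ "{x}"] exI[of _ "\<lambda>_. 1"]) simp

lemma g_in_pow:
  assumes "size N = n" "\<forall>e\<in>#N. E (fst e) (snd e)"
  shows "(prod_mset (image_mset g N) :: ('v, 'k::comm_ring_1) mpoly) \<in> ideal_pow (edge_ideal E) n"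
proof -
  obtain L where L: "mset L = N" using ex_mset by blast
  have eq: "prod_mset (image_mset g N) = (prod_list (map g L) :: ('v, 'k) mpoly)"
    using L by (metis mset_map prod_mset_prod_list)
  have "set (map g L) \<subseteq> (edge_ideal E :: ('v, 'k) mpoly set)"
  proof
    fix z assume "z \<in> set (map g L)"
    then obtain e where "e \<in> set L" "z = g e" by auto
    then have "E (fst e) (snd e)" "z = var (fst e) * var (snd e)" using assms(2) L by (auto simp: g_def)
    then show "z \<in> edge_ideal E" unfolding edge_ideal_def by (intro gen_in) blast
  qed
  moreover have "length (map g L) = n" using L assms(1) by auto
  ultimately show ?thesis unfolding eq ideal_pow_def by (intro gen_in) blast
qed




lemma card_count: "card {l. l < length xs \<and> xs ! l = S} = count (mset xs) S"
proof -
  have "count (mset xs) S = length (filter ((=) S) xs)"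
    by (simp add: count_mset count_list_eq_length_filter)
  also have "\<dots> = card {i. i < length xs \<and> S = xs ! i}" by (rule length_filter_conv_card)
  also have "{i. i < length xs \<and> S = xs ! i} = {l. l < length xs \<and> xs ! l = S}" by auto
  finally show ?thesis by simp
qed

lemma ec:
  assumes c: "conn E u v M" and sub: "M \<subseteq># image_mset sp (mset es)"
  shows "E u v \<or> even_connected E es u v"
proof -
  from conn_path[OF c] obtain p k where P: "p 0 = u" "p (2*k+1) = v" "\<forall>r\<le>2*k. E (p r) (p (r+1))"
    "mset (map (\<lambda>l. {p (2*l+1), p (2*l+2)}) [0..<k]) = M" by blast
  define F where "F = (\<lambda>l. {p (2*l+1), p (2*l+2)})"
  have MF: "mset (map F [0..<k]) = M" unfolding F_def by (rule P(4))
  show ?thesis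
  proof (cases "k = 0")
    case True
    then have "E (p 0) (p (0+1))" using P(3) by blast
    then show ?thesis using P(1,2) True by simp
  next
    case False
    have cardF: "card {l. l < k \<and> F l = S} = count M S" for S
    proof -
      have "{l. l < k \<and> F l = S} = {l. l < length (map F [0..<k]) \<and> map F [0..<k] ! l = S}" by auto
      then show ?thesis using card_count[of "map F [0..<k]" S] MF by simp
    qed
    have cardE: "card {j. j < length es \<and> sp (es ! j) = S} = count (image_mset sp (mset es)) S" for S
    proof -
      have "{j. j < length es \<and> sp (es ! j) = S} = {l. l < length (map sp es) \<and> map sp es ! l = S}" by auto
      then show ?thesis using card_count[of "map sp es" S] by simp
    qed
    have A1: "\<forall>l<k. \<exists>i<length es. {p (2*l+1), p (2*l+2)} = {fst (es!i), snd (es!i)}"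
    proof (intro allI impI)
      fix l assume "l < k"
      then have "F l \<in># M" using MF[symmetric] by simp
      then have "F l \<in># image_mset sp (mset es)" by (rule mset_subset_eqD[OF sub])
      then obtain e where "e \<in> set es" "F l = sp e" by auto
      then obtain i where "i < length es" "es ! i = e" by (auto simp: in_set_conv_nth)
      then show "\<exists>i<length es. {p (2*l+1), p (2*l+2)} = {fst (es!i), snd (es!i)}"
        using \<open>F l = sp e\<close> by (auto simp: F_def sp_def)
    qed
    have A2: "\<forall>i<length es.
           card {l. l < k \<and> {p (2*l+1), p (2*l+2)} = {fst (es!i), snd (es!i)}}
           \<le> card {j. j < length es \<and> {fst (es!j), snd (es!j)} = {fst (es!i), snd (es!i)}}"
    proof (intro allI impI)
      fix i assume "i < length es"
      have "card {l. l < k \<and> F l = sp (es!i)} \<le> card {j. j < length es \<and> sp (es ! j) = sp (es!i)}"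
        unfolding cardF cardE using sub by (rule mset_subset_eq_count)
      then show "card {l. l < k \<and> {p (2*l+1), p (2*l+2)} = {fst (es!i), snd (es!i)}}
           \<le> card {j. j < length es \<and> {fst (es!j), snd (es!j)} = {fst (es!i), snd (es!i)}}"
        by (simp add: F_def sp_def)
    qed
    have "even_connected E es u v"
      unfolding even_connected_def
      using False P(1,2,3) A1 A2 by (intro exI[of _ p] exI[of _ k]) auto
    then show ?thesis by blast
  qed
qed

lemma Em_sp: "(\<forall>e\<in>#R. fst e \<noteq> snd e) \<Longrightarrow> \<Sum>\<^sub># (image_mset mset_set (image_mset sp R)) = Em R"
  by (induction R) (auto simp: sp_def)

lemma count_Am: "count (\<Sum>v\<in>(UNIV::'v::finite set). replicate_mset (f v) v) w = f w"
proof -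
  have "count (\<Sum>v\<in>(UNIV::'v set). replicate_mset (f v) v) w = (\<Sum>v\<in>UNIV. if v = w then f w else 0)"
    unfolding count_sum by (rule sum.cong) auto
  also have "\<dots> = f w" by simp
  finally show ?thesis .
qed

lemma Dw_init: "Dw (image_mset (\<lambda>e. (fst e, snd e, {#}::'v set multiset)) L) = Em L"
  by (induction L) auto

lemma Mw_init: "Mw (image_mset (\<lambda>e. (fst e, snd e, {#}::'v set multiset)) L) = {#}"
  by (induction L) auto




theorem theorem6p7:
  fixes E :: "'v::finite \<Rightarrow> 'v \<Rightarrow> bool"
    and es :: "('v \<times> 'v) list"
    and a :: "'v \<Rightarrow>\<^sub>0 nat"
  assumes sym: "\<And>x y. E x y \<Longrightarrow> E y x"
    and irrefl: "\<And>x. \<not> E x x"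
    and s_pos: "length es \<ge> 1"
    and es_edges: "\<And>e. e \<in> set es \<Longrightarrow> E (fst e) (snd e)"
    and gen: "a \<in> min_mon_gens
        (colon (ideal_pow (edge_ideal E :: ('v, 'k::field) mpoly set) (length es + 1))
               (\<Prod>e\<leftarrow>es. var (fst e) * var (snd e)))"
  shows "\<exists>u v. a = Poly_Mapping.single u 1 + Poly_Mapping.single v 1 \<and>
               (E u v \<or> even_connected E es u v)"
proof -
  define J where "J = colon (ideal_pow (edge_ideal E :: ('v, 'k) mpoly set) (length es + 1))
               (\<Prod>e\<leftarrow>es. var (fst e) * var (snd e))"
  have symE: "\<And>x y. E x y \<Longrightarrow> E y x" using assms(1) by blast
  define R where "R = mset es"
  have m_eq: "(\<Prod>e\<leftarrow>es. var (fst e) * var (snd e)) = (mon (pmm (Em R)) :: ('v,'k) mpoly)"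
  proof -
    have "(\<Prod>e\<leftarrow>es. var (fst e) * var (snd e)) = prod_list (map (g :: _ \<Rightarrow> ('v,'k) mpoly) es)"
      unfolding g_def[abs_def] by (rule refl)
    also have "\<dots> = prod_mset (image_mset g R)"
      unfolding R_def by (metis mset_map prod_mset_prod_list)
    also have "\<dots> = mon (pmm (Em R))" by (rule prod_g)
    finally show ?thesis .
  qed
  have J_iff: "mon b \<in> J \<longleftrightarrow> (mon (b + pmm (Em R)) :: ('v,'k) mpoly) \<in> ideal_pow (edge_ideal E) (length es + 1)" for b
    unfolding J_def colon_def m_eq by simp
  from gen have aJ: "mon a \<in> J" and minim: "\<And>b. (mon b :: ('v,'k) mpoly) dvd mon a \<Longrightarrow> mon b \<in> J \<Longrightarrow> b = a"
    unfolding min_mon_gens_def J_def by auto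
  from aJ have "a + pmm (Em R) \<in> U E (length es + 1)"
    unfolding J_iff by (rule mon_in_pow)
  then obtain L where L: "size L = length es + 1" "\<forall>e\<in>#L. E (fst e) (snd e)"
    "\<forall>v. count (Em L) v \<le> Poly_Mapping.lookup (a + pmm (Em R)) v" unfolding U_def by blast
  define A where "A = (\<Sum>v\<in>(UNIV::'v set). replicate_mset (Poly_Mapping.lookup a v) v)"
  have cA: "count A w = Poly_Mapping.lookup a w" for w unfolding A_def by (rule count_Am)
  define W0 where "W0 = image_mset (\<lambda>e. (fst e, snd e, {#}::'v set multiset)) L"
  have "\<exists>u v M. {#u,v#} \<subseteq># A \<and> conn E u v M \<and> M \<subseteq># Mw W0 + image_mset sp R"
  proof (rule comb[where E=E and W=W0 and ES=R and A=A])
    show "\<And>x y. E x y \<Longrightarrow> E y x" by (rule symE)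
    show "size W0 = size R + 1" using L(1) by (simp add: W0_def R_def)
    show "\<forall>f\<in>#W0. conn E (fst f) (fst (snd f)) (snd (snd f))" using L(2) by (auto simp: W0_def intro: conn.base)
    show "Dw W0 \<subseteq># A + Em R" unfolding W0_def Dw_init sub_count
      using L(3) by (simp add: cA lookup_add lookup_pmm)
    show "\<forall>e\<in>#R. E (fst e) (snd e)" using es_edges by (simp add: R_def)
  qed
  then obtain u v M where uv: "{#u,v#} \<subseteq># A" and c: "conn E u v M" and Msub: "M \<subseteq># image_mset sp R"
    by (auto simp: W0_def Mw_init)
  define b :: "'v \<Rightarrow>\<^sub>0 nat" where "b = Poly_Mapping.single u 1 + Poly_Mapping.single v 1"
  have b_pmm: "b = pmm {#u,v#}" by (simp add: b_def)
  have "mon b \<in> J"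
  proof -
    have "\<exists>N. size N = size M + 1 \<and> (\<forall>e\<in>#N. E (fst e) (snd e)) \<and>
     Em N = {#u,v#} + \<Sum>\<^sub># (image_mset mset_set M)"
      by (rule conn_edges[where E=E and x=u and y=v and M=M]) (rule irrefl, rule c)
    then obtain N where N: "size N = size M + 1" "\<forall>e\<in>#N. E (fst e) (snd e)"
      "Em N = {#u,v#} + \<Sum>\<^sub># (image_mset mset_set M)" by blast
    have "image_mset sp R = M + (image_mset sp R - M)" using Msub by simp
    from image_mset_eq_plusD[OF this] obtain R1 R2 where R12: "R = R1 + R2" "M = image_mset sp R1" by blast
    have "\<forall>e\<in>#R1. fst e \<noteq> snd e"
    proof
      fix e assume "e \<in># R1"
      then have "e \<in># mset es" using R12(1) R_def by simp
      then have "E (fst e) (snd e)" using es_edges by simp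
      then show "fst e \<noteq> snd e" using irrefl by metis
    qed
    then have "\<Sum>\<^sub># (image_mset mset_set M) = Em R1" unfolding R12(2) by (rule Em_sp)
    then have "{#u,v#} + Em R = Em (N + R2)" using N(3) R12(1) by simp
    moreover have "size (N + R2) = length es + 1" using N(1) R12 unfolding R_def
      by (metis add.commute add.left_commute size_image_mset size_mset size_union)
    moreover have "\<forall>e\<in>#N + R2. E (fst e) (snd e)"
    proof
      fix e assume "e \<in># N + R2"
      then consider "e \<in># N" | "e \<in># R2" by auto
      then show "E (fst e) (snd e)"
      proof cases
        case 1 then show ?thesis using N(2) by blast
      next
        case 2 then have "e \<in># mset es" using R12(1) R_def by simp
        then show ?thesis using es_edges by simp
      qed
    qed
    ultimately have "prod_mset (image_mset g (N + R2)) \<in> (ideal_pow (edge_ideal E) (length es + 1) :: ('v,'k) mpoly set)"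
      using g_in_pow by blast
    then have "(mon (pmm (Em (N + R2))) :: ('v,'k) mpoly) \<in> ideal_pow (edge_ideal E) (length es + 1)"
      unfolding prod_g .
    then show ?thesis unfolding J_iff b_pmm
      by (metis \<open>{#u,v#} + Em R = Em (N + R2)\<close> pmm_simps(3))
  qed
  moreover have "(mon b :: ('v,'k) mpoly) dvd mon a"
  proof -
    have le: "Poly_Mapping.lookup b w \<le> Poly_Mapping.lookup a w" for w
      using mset_subset_eq_count[OF uv, of w] unfolding b_pmm lookup_pmm cA .
    have "a = b + (a - b)"
      by (rule poly_mapping_eqI) (simp add: lookup_add lookup_minus le)
    then have "(mon a :: ('v,'k) mpoly) = mon b * mon (a - b)" by (metis mon_mult)
    then show ?thesis by (rule dvdI)
  qed
  ultimately have "b = a" using minim by blast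
  moreover have "E u v \<or> even_connected E es u v" using ec[OF c] Msub by (simp add: R_def)
  ultimately show ?thesis unfolding b_def by blast
qed


end
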